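(* Assume $\mathcal W$ and $\mathcal V$ are finite sets. Let $h_\star=\langle f_\star,g_\star\rangle$, $\hat h=\langle\hat f,\hat g\rangle$ with $f_\star,\hat f:\mathcal W\to\mathbb R^p$, $g_\star,\hat g:\mathcal V\to\mathbb R^p$, and let $\mathcal D_{\mathcal W,i}$, $\mathcal D_{\mathcal V,j}$ ($i,j\in\{1,2\}$) be distributions on $\mathcal W$, $\mathcal V$ with $\mathcal D_{i\otimes j}:=\mathcal D_{\mathcal W,i}\otimes\mathcal D_{\mathcal V,j}$. Suppose that for all $(i,j)\ne(2,2)$: $\mathcal R(\hat h;\mathcal D_{i\otimes j})\le\epsilon^2$ and $\mathbb E_{\mathcal D_{i\otimes j}}[h_\star(w,v)^2]\le M_\star^2$, and that $\epsilon<\sigma_\star/2$, where $\sigma_\star^2:=\sigma_p(\mathbb E_{\mathcal D_{\mathcal W,1}}[f_\star f_\star^\top])\,\sigma_p(\mathbb E_{\mathcal D_{\mathcal V,1}}[g_\star g_\star^\top])>0$. Then $\mathcal R(\hat h;\mathcal D_{2\otimes2})\le 64\,\epsilon^2\frac{M_\star^4}{\sigma_\star^4}$.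
   Context: For a scalar predictor $\hat h$ and distribution $\mathcal D$ on $\mathcal W\times\mathcal V$, $\mathcal R(\hat h;\mathcal D):=\mathbb E_{(w,v)\sim\mathcal D}[(h_\star(w,v)-\hat h(w,v))^2]$. $\sigma_p$ denotes the $p$-th largest singular value. *)

theory Defs
  imports "HOL-Analysis.Analysis"
begin

definition is_dist :: "('a::finite \<Rightarrow> real) \<Rightarrow> bool" where
  "is_dist d \<longleftrightarrow> (\<forall>x. 0 \<le> d x) \<and> (\<Sum>x\<in>UNIV. d x) = 1"

definition bilin :: "('w \<Rightarrow> real^'p) \<Rightarrow> ('v \<Rightarrow> real^'p) \<Rightarrow> 'w \<Rightarrow> 'v \<Rightarrow> real" where
  "bilin f g w v = f w \<bullet> g v"

definition prod_expect :: "('w::finite \<Rightarrow> real) \<Rightarrow> ('v::finite \<Rightarrow> real) \<Rightarrow> ('w \<Rightarrow> 'v \<Rightarrow> real) \<Rightarrow> real" where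
  "prod_expect dW dV F = (\<Sum>w\<in>UNIV. \<Sum>v\<in>UNIV. dW w * dV v * F w v)"

definition risk :: "('w::finite \<Rightarrow> 'v::finite \<Rightarrow> real) \<Rightarrow> ('w \<Rightarrow> 'v \<Rightarrow> real) \<Rightarrow> ('w \<Rightarrow> real) \<Rightarrow> ('v \<Rightarrow> real) \<Rightarrow> real" where
  "risk hstar hhat dW dV = prod_expect dW dV (\<lambda>w v. (hstar w v - hhat w v)^2)"

definition second_moment :: "('a::finite \<Rightarrow> real) \<Rightarrow> ('a \<Rightarrow> real^'p) \<Rightarrow> real^'p^'p" where
  "second_moment d f = (\<Sum>x\<in>UNIV. d x *\<^sub>R (\<chi> i j. f x $ i * f x $ j))"

text \<open>Smallest singular value of a square p x p matrix, i.e. sigma_p (the p-th largest):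
  min over unit vectors x of |A x|.\<close>
definition sigma_min :: "real^'p^'p \<Rightarrow> real" where
  "sigma_min A = Inf {norm (A *v x) | x. norm x = 1}"

end

theory Submission
  imports Defs
begin


definition wn :: "('a::finite \<Rightarrow> real) \<Rightarrow> ('a \<Rightarrow> real) \<Rightarrow> real" where
  "wn d \<phi> = sqrt (\<Sum>x\<in>UNIV. d x * (\<phi> x)^2)"

definition emb :: "('a::finite \<Rightarrow> real) \<Rightarrow> ('a \<Rightarrow> real) \<Rightarrow> real^'a" where
  "emb d \<phi> = (\<chi> x. sqrt (d x) * \<phi> x)"

lemma norm_emb: assumes "\<And>x. 0 \<le> d x" shows "norm (emb d \<phi>) = wn d \<phi>"
  unfolding norm_vec_def L2_set_def wn_def emb_def
  by (simp add: power_mult_distrib assms)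

lemma inner_emb: assumes "\<And>x. 0 \<le> d x" shows "inner (emb d \<phi>) (emb d \<psi>) = (\<Sum>x\<in>UNIV. d x * \<phi> x * \<psi> x)"
  unfolding inner_vec_def emb_def
  by (rule sum.cong) (auto simp: assms real_sqrt_mult[symmetric])

lemma emb_add: "emb d (\<lambda>x. \<phi> x + \<psi> x) = emb d \<phi> + emb d \<psi>"
  unfolding emb_def by (simp add: vec_eq_iff algebra_simps)
lemma emb_diff: "emb d (\<lambda>x. \<phi> x - \<psi> x) = emb d \<phi> - emb d \<psi>"
  unfolding emb_def by (simp add: vec_eq_iff algebra_simps)

lemma wn_nonneg: "0 \<le> wn d \<phi>" if "\<And>x. 0 \<le> d x"
  unfolding wn_def using that by (simp add: sum_nonneg)

lemma wn_sq: "(wn d \<phi>)^2 = (\<Sum>x\<in>UNIV. d x * (\<phi> x)^2)" if "\<And>x. 0 \<le> d x"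
  unfolding wn_def using that by (simp add: sum_nonneg)

lemma wn_triangle: assumes "\<And>x. 0 \<le> d x"
  shows "wn d (\<lambda>x. \<phi> x + \<psi> x) \<le> wn d \<phi> + wn d \<psi>"
  using norm_triangle_ineq[of "emb d \<phi>" "emb d \<psi>"] by (simp add: norm_emb[OF assms] emb_add[symmetric])

lemma wn_diff: assumes "\<And>x. 0 \<le> d x"
  shows "wn d (\<lambda>x. \<phi> x - \<psi> x) \<le> wn d \<phi> + wn d \<psi>"
  using norm_triangle_ineq4[of "emb d \<phi>" "emb d \<psi>"] by (simp add: norm_emb[OF assms] emb_diff[symmetric])

lemma wn_diff2: assumes "\<And>x. 0 \<le> d x"
  shows "wn d \<phi> - wn d \<psi> \<le> wn d (\<lambda>x. \<phi> x - \<psi> x)"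
  using norm_triangle_ineq2[of "emb d \<phi>" "emb d \<psi>"] by (simp add: norm_emb[OF assms] emb_diff[symmetric])

lemma wn_CS: assumes "\<And>x. 0 \<le> d x"
  shows "\<bar>\<Sum>x\<in>UNIV. d x * \<phi> x * \<psi> x\<bar> \<le> wn d \<phi> * wn d \<psi>"
  using Cauchy_Schwarz_ineq2[of "emb d \<phi>" "emb d \<psi>"] by (simp add: norm_emb[OF assms] inner_emb[OF assms])

lemma wn_le_iff: assumes "\<And>x. 0 \<le> d x" "0 \<le> B"
  shows "wn d \<phi> \<le> B \<longleftrightarrow> (\<Sum>x\<in>UNIV. d x * (\<phi> x)^2) \<le> B^2"
proof -
  have "B = sqrt (B^2)" using assms(2) by simp
  then show ?thesis unfolding wn_def by (metis real_sqrt_le_iff)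
qed

lemma wn_block_CS:
  fixes d :: "'w::finite \<Rightarrow> real" and e :: "'v::finite \<Rightarrow> real"
  assumes d: "\<And>x. 0 \<le> d x" and e: "\<And>x. 0 \<le> e x"
  shows "wn e (\<lambda>v. \<Sum>w\<in>UNIV. d w * c w * D w v) \<le> wn d c * sqrt (\<Sum>w\<in>UNIV. \<Sum>v\<in>UNIV. d w * e v * (D w v)^2)"
proof -
  have "(\<Sum>v\<in>UNIV. e v * (\<Sum>w\<in>UNIV. d w * c w * D w v)^2)
      \<le> (\<Sum>v\<in>UNIV. e v * ((wn d c)^2 * (wn d (\<lambda>w. D w v))^2))"
  proof (rule sum_mono)
    fix v
    have "(\<Sum>w\<in>UNIV. d w * c w * D w v)^2 \<le> (wn d c * wn d (\<lambda>w. D w v))^2"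
    proof -
      have "\<bar>\<Sum>w\<in>UNIV. d w * c w * D w v\<bar> \<le> wn d c * wn d (\<lambda>w. D w v)"
        using wn_CS[OF d, where \<phi>=c and \<psi>="\<lambda>w. D w v"] by simp
      from power_mono[OF this abs_ge_zero, of 2] show ?thesis by simp
    qed
    then show "e v * (\<Sum>w\<in>UNIV. d w * c w * D w v)^2 \<le> e v * ((wn d c)^2 * (wn d (\<lambda>w. D w v))^2)"
      using e by (simp add: mult_left_mono power_mult_distrib)
  qed
  also have "\<dots> = (wn d c)^2 * (\<Sum>w\<in>UNIV. \<Sum>v\<in>UNIV. d w * e v * (D w v)^2)"
  proof -
    have "(\<Sum>v\<in>UNIV. e v * ((wn d c)^2 * (wn d (\<lambda>w. D w v))^2))
        = (wn d c)^2 * (\<Sum>v\<in>UNIV. \<Sum>w\<in>UNIV. d w * e v * (D w v)^2)"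
      unfolding wn_sq[OF d] sum_distrib_left
      by (rule sum.cong[OF refl], rule sum.cong[OF refl]) (simp add: algebra_simps)
    also have "(\<Sum>v\<in>UNIV. \<Sum>w\<in>UNIV. d w * e v * (D w v)^2) = (\<Sum>w\<in>UNIV. \<Sum>v\<in>UNIV. d w * e v * (D w v)^2)"
      by (rule sum.swap)
    finally show ?thesis .
  qed
  finally have "(\<Sum>v\<in>UNIV. e v * (\<Sum>w\<in>UNIV. d w * c w * D w v)^2)
       \<le> (wn d c * sqrt (\<Sum>w\<in>UNIV. \<Sum>v\<in>UNIV. d w * e v * (D w v)^2))^2"
    using d e by (simp add: power_mult_distrib sum_nonneg)
  then show ?thesis
    using d e by (subst wn_le_iff[OF e]) (auto intro!: mult_nonneg_nonneg wn_nonneg sum_nonneg)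
qed



lemma sm_comp: "second_moment d f $ i $ j = (\<Sum>w\<in>UNIV. d w * (f w $ i * f w $ j))"
  unfolding second_moment_def by simp

lemma sm_mult: "second_moment d f *v x = (\<Sum>w\<in>UNIV. (d w * (f w \<bullet> x)) *\<^sub>R f w)"
proof (subst vec_eq_iff, intro allI)
  fix i
  have "(second_moment d f *v x) $ i = (\<Sum>j\<in>UNIV. (\<Sum>w\<in>UNIV. d w * (f w $ i * f w $ j)) * x $ j)"
    unfolding matrix_vector_mult_def sm_comp by simp
  also have "\<dots> = (\<Sum>j\<in>UNIV. \<Sum>w\<in>UNIV. d w * (f w $ i * f w $ j) * x $ j)"
    by (simp add: sum_distrib_right)
  also have "\<dots> = (\<Sum>w\<in>UNIV. \<Sum>j\<in>UNIV. d w * (f w $ i * f w $ j) * x $ j)"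
    by (rule sum.swap)
  also have "\<dots> = (\<Sum>w\<in>UNIV. d w * (f w \<bullet> x) * f w $ i)"
    unfolding inner_vec_def by (simp add: sum_distrib_left sum_distrib_right algebra_simps)
  finally show "(second_moment d f *v x) $ i = (\<Sum>w\<in>UNIV. (d w * (f w \<bullet> x)) *\<^sub>R f w) $ i"
    by simp
qed

lemma sm_inner: "y \<bullet> (second_moment d f *v x) = (\<Sum>w\<in>UNIV. d w * (f w \<bullet> x) * (f w \<bullet> y))"
  unfolding sm_mult inner_sum_right by (simp add: inner_commute)

lemma sm_sym: "y \<bullet> (second_moment d f *v x) = x \<bullet> (second_moment d f *v y)"
  unfolding sm_inner by (simp add: algebra_simps)

lemma sm_quad: "x \<bullet> (second_moment d f *v x) = (\<Sum>w\<in>UNIV. d w * (f w \<bullet> x)^2)"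
  unfolding sm_inner by (simp add: power2_eq_square algebra_simps)

lemma lin_zero:
  fixes \<alpha> \<beta> :: real
  assumes h: "\<And>t. 0 \<le> 2*t*\<alpha> + t^2*\<beta>"
  shows "\<alpha> = 0"
proof -
  define k where "k = \<bar>\<beta>\<bar> + 1"
  have k: "k > 0" unfolding k_def by simp
  have "0 \<le> 2*(-\<alpha>/k)*\<alpha> + (-\<alpha>/k)^2*\<beta>" by (rule h)
  then have "0 \<le> k^2 * (2*(-\<alpha>/k)*\<alpha> + (-\<alpha>/k)^2*\<beta>)" using k by simp
  also have "k^2 * (2*(-\<alpha>/k)*\<alpha> + (-\<alpha>/k)^2*\<beta>) = \<alpha>^2*\<beta> - 2*\<alpha>^2*k"
    using k by (simp add: field_simps power2_eq_square)
  finally have 1: "0 \<le> \<alpha>^2*\<beta> - 2*\<alpha>^2*k" .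
  have "\<alpha>^2*\<beta> \<le> \<alpha>^2*(k-1)" unfolding k_def by (intro mult_left_mono) auto
  with 1 k have "\<alpha>^2 * (k+1) \<le> 0" by (simp add: algebra_simps)
  with k have "\<alpha>^2 \<le> 0" by (simp add: mult_le_0_iff)
  then show ?thesis by simp
qed

lemma psd_lower:
  fixes A :: "real^'n^'n"
  assumes sym: "\<And>x y. y \<bullet> (A *v x) = x \<bullet> (A *v y)"
    and psd: "\<And>x. 0 \<le> x \<bullet> (A *v x)"
    and low: "\<And>x. a * norm x \<le> norm (A *v x)"
  shows "a * (norm x)^2 \<le> x \<bullet> (A *v x)"
proof -
  define q where "q = (\<lambda>x. x \<bullet> (A *v x))"
  have cont: "continuous_on (sphere 0 1) q"
    unfolding q_def by (intro continuous_intros linear_continuous_on matrix_vector_mul_linear bounded_linear_inner_right) (simp add: linear_linear matrix_vector_mul_linear)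
  obtain u where u: "u \<in> sphere 0 1" and umin: "\<And>y. y \<in> sphere 0 1 \<Longrightarrow> q u \<le> q y"
    using continuous_attains_inf[OF compact_sphere _ cont] by auto
  have nu: "norm u = 1" using u by simp
  have uu: "u \<bullet> u = 1" using nu by (simp add: norm_eq_1)
  define \<mu> where "\<mu> = q u"
  have qscale: "q (c *\<^sub>R y) = c^2 * q y" for c y
    unfolding q_def by (simp add: matrix_vector_mult_scaleR power2_eq_square)
  have hq: "\<mu> * (norm y)^2 \<le> q y" for y
  proof (cases "y = 0")
    case True then show ?thesis by (simp add: q_def)
  next
    case False
    then have ny: "norm y > 0" by simp
    have "q u \<le> q ((1/norm y) *\<^sub>R y)" by (rule umin) (use ny in simp)
    also have "\<dots> = q y / (norm y)^2" unfolding qscale by (simp add: field_simps)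
    finally show ?thesis unfolding \<mu>_def using ny by (simp add: field_simps)
  qed
  have var: "0 \<le> 2*t*(v \<bullet> (A *v u) - \<mu> * (u \<bullet> v)) + t^2*(q v - \<mu> * (norm v)^2)" for t v
  proof -
    have "\<mu> * (norm (u + t *\<^sub>R v))^2 \<le> q (u + t *\<^sub>R v)" by (rule hq)
    moreover have "q (u + t *\<^sub>R v) = q u + 2*t*(v \<bullet> (A *v u)) + t^2 * q v"
      unfolding q_def using sym[of u v]
      by (simp add: matrix_vector_right_distrib matrix_vector_mult_scaleR inner_add_left inner_add_right power2_eq_square algebra_simps)
    moreover have "(norm (u + t *\<^sub>R v))^2 = 1 + 2*t*(u \<bullet> v) + t^2 * (norm v)^2"
      using uu unfolding power2_norm_eq_inner by (simp add: inner_add_left inner_add_right power2_eq_square algebra_simps inner_commute)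
    ultimately show ?thesis unfolding \<mu>_def by (simp add: algebra_simps)
  qed
  define v where "v = A *v u - \<mu> *\<^sub>R u"
  have "v \<bullet> (A *v u) - \<mu> * (u \<bullet> v) = 0"
    by (rule lin_zero[OF var])
  then have "v \<bullet> v = 0" unfolding v_def by (simp add: inner_diff_left inner_diff_right algebra_simps inner_commute)
  then have Au: "A *v u = \<mu> *\<^sub>R u" unfolding v_def by simp
  have mu0: "0 \<le> \<mu>" unfolding \<mu>_def q_def by (rule psd)
  have "a \<le> \<mu>" using low[of u] nu mu0 by (simp add: Au)
  then have "a * (norm x)^2 \<le> \<mu> * (norm x)^2" by (simp add: mult_right_mono)
  also have "\<dots> \<le> x \<bullet> (A *v x)" using hq[of x] by (simp add: q_def)
  finally show ?thesis .
qed



lemma sigma_min_low: "sigma_min A * norm x \<le> norm (A *v x)"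
proof (cases "x = 0")
  case True then show ?thesis by simp
next
  case False
  then have nx: "norm x > 0" by simp
  have "sigma_min A \<le> norm (A *v ((1/norm x) *\<^sub>R x))"
    unfolding sigma_min_def
    by (rule cInf_lower) (use nx in \<open>auto intro!: exI[of _ "(1/norm x) *\<^sub>R x"] bdd_belowI[of _ 0]\<close>)
  also have "\<dots> = norm (A *v x) / norm x" using nx by (simp add: matrix_vector_mult_scaleR)
  finally show ?thesis using nx by (simp add: field_simps)
qed

lemma sigma_min_nonneg: "0 \<le> sigma_min (A::real^'n^'n)"
  unfolding sigma_min_def
  by (rule cInf_greatest) (auto intro!: exI[of _ "axis undefined 1"] simp: norm_axis_1)

lemma sm_quad_lower:
  assumes "\<And>x. 0 \<le> d x"
  shows "sigma_min (second_moment d f) * (norm x)^2 \<le> (\<Sum>w\<in>UNIV. d w * (f w \<bullet> x)^2)"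
proof -
  have "sigma_min (second_moment d f) * (norm x)^2 \<le> x \<bullet> (second_moment d f *v x)"
    by (rule psd_lower) (auto simp: sm_sym sm_quad sigma_min_low assms sum_nonneg)
  then show ?thesis by (simp add: sm_quad)
qed

lemma wn_mono: assumes "\<And>x. 0 \<le> d x" "\<And>x. \<bar>\<phi> x\<bar> \<le> \<bar>\<psi> x\<bar>"
  shows "wn d \<phi> \<le> wn d \<psi>"
  unfolding wn_def
  by (rule real_sqrt_le_mono, rule sum_mono, rule mult_left_mono)
     (use assms in \<open>auto simp: abs_le_square_iff\<close>)

lemma wn_scale: assumes "\<And>x. 0 \<le> d x"
  shows "wn d (\<lambda>x. c * \<phi> x) = \<bar>c\<bar> * wn d \<phi>"
proof -
  have "(\<Sum>x\<in>UNIV. d x * (c * \<phi> x)^2) = c^2 * (\<Sum>x\<in>UNIV. d x * (\<phi> x)^2)"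
    by (simp add: sum_distrib_left power_mult_distrib algebra_simps)
  then show ?thesis unfolding wn_def by (simp add: real_sqrt_mult)
qed

locale bsetting =
  fixes fs fh :: "'w::finite \<Rightarrow> real^'p" and gs gh :: "'v::finite \<Rightarrow> real^'p"
    and d1 d2 :: "'w \<Rightarrow> real" and e1 e2 :: "'v \<Rightarrow> real" and a b M \<epsilon> \<sigma> :: real
  assumes d1: "\<And>x. 0 \<le> d1 x" and d2: "\<And>x. 0 \<le> d2 x"
    and e1: "\<And>x. 0 \<le> e1 x" and e2: "\<And>x. 0 \<le> e2 x"
    and a: "a > 0" and b: "b > 0"
    and sig: "\<sigma> = sqrt (a*b)"
    and lowW: "\<And>x. a * norm x \<le> norm (second_moment d1 fs *v x)"
    and quadV: "\<And>y. b * (norm y)^2 \<le> (\<Sum>v\<in>UNIV. e1 v * (gs v \<bullet> y)^2)"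
    and G2: "a * (\<Sum>v\<in>UNIV. e2 v * (norm (gs v))^2) \<le> M^2"
    and F2: "b * (\<Sum>w\<in>UNIV. d2 w * (norm (fs w))^2) \<le> M^2"
    and M: "\<sigma> \<le> M"
    and R11: "(\<Sum>w\<in>UNIV. \<Sum>v\<in>UNIV. d1 w * e1 v * (fs w \<bullet> gs v - fh w \<bullet> gh v)^2) \<le> \<epsilon>^2"
    and R12: "(\<Sum>w\<in>UNIV. \<Sum>v\<in>UNIV. d1 w * e2 v * (fs w \<bullet> gs v - fh w \<bullet> gh v)^2) \<le> \<epsilon>^2"
    and R21: "(\<Sum>w\<in>UNIV. \<Sum>v\<in>UNIV. d2 w * e1 v * (fs w \<bullet> gs v - fh w \<bullet> gh v)^2) \<le> \<epsilon>^2"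
    and eps: "0 \<le> \<epsilon>" "\<epsilon> < \<sigma> / 2"
begin

lemma sig_pos: "\<sigma> > 0" using a b sig by simp
lemma sig_sq: "\<sigma>^2 = a*b" using a b sig by simp

lemma psi_bound:
  assumes e: "\<And>x. 0 \<le> e x"
    and R: "(\<Sum>w\<in>UNIV. \<Sum>v\<in>UNIV. d1 w * e v * (fs w \<bullet> gs v - fh w \<bullet> gh v)^2) \<le> \<epsilon>^2"
  shows "wn e (\<lambda>v. \<Sum>w\<in>UNIV. d1 w * c w * (fs w \<bullet> gs v - fh w \<bullet> gh v)) \<le> wn d1 c * \<epsilon>"
proof -
  have "sqrt (\<Sum>w\<in>UNIV. \<Sum>v\<in>UNIV. d1 w * e v * (fs w \<bullet> gs v - fh w \<bullet> gh v)^2) \<le> \<epsilon>"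
    using R eps(1) real_sqrt_le_mono[OF R] by simp
  then show ?thesis
    using wn_block_CS[OF d1 e, where c=c and D="\<lambda>w v. fs w \<bullet> gs v - fh w \<bullet> gh v"]
    by (meson order_trans mult_left_mono wn_nonneg d1)
qed

lemma cov_core:
  fixes x :: "real^'p"
  defines "z \<equiv> (\<Sum>w\<in>UNIV. (d1 w * (fs w \<bullet> x)) *\<^sub>R fh w)"
    and "t \<equiv> wn e1 (\<lambda>v. gs v \<bullet> (second_moment d1 fs *v x))"
  shows "(\<sigma> - \<epsilon>) * t \<le> \<sigma> * wn e1 (\<lambda>v. gh v \<bullet> z)"
    and "\<sigma> * wn e2 (\<lambda>v. gh v \<bullet> z) \<le> (M+\<epsilon>) * t"
    and "sqrt b * norm (second_moment d1 fs *v x) \<le> t" and "a * norm x \<le> norm (second_moment d1 fs *v x)"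
proof -
  define u where "u = second_moment d1 fs *v x"
  have t_def: "t = wn e1 (\<lambda>v. gs v \<bullet> u)" unfolding t_def u_def ..
  define c where "c = (\<lambda>w. fs w \<bullet> x)"
  define \<psi> where "\<psi> = (\<lambda>v. \<Sum>w\<in>UNIV. d1 w * c w * (fs w \<bullet> gs v - fh w \<bullet> gh v))"
  have phi: "(\<lambda>v. gh v \<bullet> z) = (\<lambda>v. gs v \<bullet> u - \<psi> v)"
  proof
    fix v
    have 1: "gh v \<bullet> z = (\<Sum>w\<in>UNIV. d1 w * c w * (fh w \<bullet> gh v))"
      unfolding z_def c_def inner_sum_right by (simp add: inner_commute)
    have 2: "gs v \<bullet> u = (\<Sum>w\<in>UNIV. d1 w * c w * (fs w \<bullet> gs v))"
      unfolding u_def c_def sm_inner by (simp add: algebra_simps)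
    show "gh v \<bullet> z = gs v \<bullet> u - \<psi> v"
      unfolding 1 2 \<psi>_def by (simp add: sum_subtractf[symmetric] algebra_simps)
  qed
  have psi1: "wn e1 \<psi> \<le> wn d1 c * \<epsilon>" unfolding \<psi>_def by (rule psi_bound[OF e1 R11])
  have psi2: "wn e2 \<psi> \<le> wn d1 c * \<epsilon>" unfolding \<psi>_def by (rule psi_bound[OF e2 R12])
  show au: "a * norm x \<le> norm (second_moment d1 fs *v x)" by (rule lowW)
  have au: "a * norm x \<le> norm u" unfolding u_def by (rule lowW)
  have wc2: "(wn d1 c)^2 = x \<bullet> u"
    unfolding wn_sq[OF d1] u_def sm_quad c_def by simp
  also have "\<dots> \<le> norm x * norm u" by (rule norm_cauchy_schwarz)
  finally have "a * (wn d1 c)^2 \<le> a * (norm x * norm u)" using a by simp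
  also have "\<dots> \<le> norm u * norm u" using mult_left_mono[OF au norm_ge_zero[of u]] by (simp add: algebra_simps)
  finally have wc: "a * (wn d1 c)^2 \<le> (norm u)^2" by (simp add: power2_eq_square)
  have t2: "t^2 = (\<Sum>v\<in>UNIV. e1 v * (gs v \<bullet> u)^2)" unfolding t_def by (rule wn_sq[OF e1])
  have bt: "b * (norm u)^2 \<le> t^2" unfolding t2 by (rule quadV)
  have t0: "0 \<le> t" unfolding t_def by (rule wn_nonneg[OF e1])
  show "sqrt b * norm (second_moment d1 fs *v x) \<le> t" unfolding u_def[symmetric]
    using bt b t0 by (metis real_le_rsqrt real_sqrt_mult real_sqrt_abs abs_of_nonneg norm_ge_zero real_sqrt_le_mono real_sqrt_pow2 zero_le_power2 less_imp_le mult_nonneg_nonneg real_sqrt_ge_zero)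
  have "\<sigma>^2 * (wn d1 c)^2 \<le> t^2"
  proof -
    have "b * (a * (wn d1 c)^2) \<le> b * (norm u)^2" using mult_left_mono[OF wc, of b] b by simp
    with bt show ?thesis unfolding sig_sq by (simp add: algebra_simps)
  qed
  then have "(\<sigma> * wn d1 c)^2 \<le> t^2" by (simp add: power_mult_distrib)
  then have sc: "\<sigma> * wn d1 c \<le> t" by (rule power2_le_imp_le[OF _ t0])
  have g2: "a * (wn e2 (\<lambda>v. gs v \<bullet> u))^2 \<le> M^2 * (norm u)^2"
  proof -
    have "(wn e2 (\<lambda>v. gs v \<bullet> u))^2 = (\<Sum>v\<in>UNIV. e2 v * (gs v \<bullet> u)^2)" by (rule wn_sq[OF e2])
    also have "\<dots> \<le> (\<Sum>v\<in>UNIV. e2 v * ((norm (gs v))^2 * (norm u)^2))"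
    proof (rule sum_mono, rule mult_left_mono[OF _ e2])
      fix v
      have "\<bar>gs v \<bullet> u\<bar> \<le> norm (gs v) * norm u" by (rule Cauchy_Schwarz_ineq2)
      from power_mono[OF this abs_ge_zero, of 2] show "(gs v \<bullet> u)^2 \<le> (norm (gs v))^2 * (norm u)^2"
        by (simp add: power_mult_distrib)
    qed
    also have "\<dots> = (\<Sum>v\<in>UNIV. e2 v * (norm (gs v))^2) * (norm u)^2"
      unfolding sum_distrib_right by (simp add: mult.assoc)
    finally show ?thesis using mult_right_mono[OF G2, of "(norm u)^2"] a
      by (smt (verit) mult_left_mono mult.assoc zero_le_power2)
  qed
  have "\<sigma>^2 * (wn e2 (\<lambda>v. gs v \<bullet> u))^2 \<le> (M * t)^2"
  proof -
    have "\<sigma>^2 * (wn e2 (\<lambda>v. gs v \<bullet> u))^2 = b * (a * (wn e2 (\<lambda>v. gs v \<bullet> u))^2)"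
      unfolding sig_sq by simp
    also have "\<dots> \<le> b * (M^2 * (norm u)^2)" using g2 b by simp
    also have "\<dots> = M^2 * (b * (norm u)^2)" by simp
    also have "\<dots> \<le> M^2 * t^2" using bt by (simp add: mult_left_mono)
    finally show ?thesis by (simp add: power_mult_distrib)
  qed
  then have "(\<sigma> * wn e2 (\<lambda>v. gs v \<bullet> u))^2 \<le> (M * t)^2" by (simp add: power_mult_distrib)
  then have sg: "\<sigma> * wn e2 (\<lambda>v. gs v \<bullet> u) \<le> M * t"
    by (rule power2_le_imp_le) (use t0 sig_pos M in simp)
  have spsi1: "\<sigma> * wn e1 \<psi> \<le> \<epsilon> * t"
  proof -
    have "\<sigma> * wn e1 \<psi> \<le> \<sigma> * (wn d1 c * \<epsilon>)" by (rule mult_left_mono[OF psi1]) (use sig_pos in simp)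
    also have "\<dots> = (\<sigma> * wn d1 c) * \<epsilon>" by simp
    also have "\<dots> \<le> t * \<epsilon>" by (rule mult_right_mono[OF sc eps(1)])
    finally show ?thesis by (simp add: mult.commute)
  qed
  have spsi2: "\<sigma> * wn e2 \<psi> \<le> \<epsilon> * t"
  proof -
    have "\<sigma> * wn e2 \<psi> \<le> \<sigma> * (wn d1 c * \<epsilon>)" by (rule mult_left_mono[OF psi2]) (use sig_pos in simp)
    also have "\<dots> = (\<sigma> * wn d1 c) * \<epsilon>" by simp
    also have "\<dots> \<le> t * \<epsilon>" by (rule mult_right_mono[OF sc eps(1)])
    finally show ?thesis by (simp add: mult.commute)
  qed
  have "\<sigma> * wn e2 (\<lambda>v. gh v \<bullet> z) \<le> \<sigma> * (wn e2 (\<lambda>v. gs v \<bullet> u) + wn e2 \<psi>)"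
    unfolding phi using wn_diff[OF e2, where \<phi>="\<lambda>v. gs v \<bullet> u" and \<psi>=\<psi>] sig_pos by simp
  also have "\<dots> \<le> M * t + \<epsilon> * t"
    using sg spsi2 by (simp add: distrib_left)
  finally show "\<sigma> * wn e2 (\<lambda>v. gh v \<bullet> z) \<le> (M+\<epsilon>) * t" by (simp add: algebra_simps)
  have "\<sigma> * wn e1 (\<lambda>v. gh v \<bullet> z) \<ge> \<sigma> * (t - wn e1 \<psi>)"
    unfolding phi t_def using wn_diff2[OF e1, where \<phi>="\<lambda>v. gs v \<bullet> u" and \<psi>=\<psi>] sig_pos by simp
  moreover have "\<sigma> * (t - wn e1 \<psi>) \<ge> (\<sigma> - \<epsilon>) * t"
    using spsi1 by (simp add: right_diff_distrib left_diff_distrib)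
  ultimately show "(\<sigma> - \<epsilon>) * t \<le> \<sigma> * wn e1 (\<lambda>v. gh v \<bullet> z)" by simp
qed

end


context bsetting begin

lemma se_pos: "\<sigma> - \<epsilon> > 0" using eps sig_pos by simp
lemma M_pos: "M > 0" using M sig_pos by simp

lemma Dsurj: "surj (\<lambda>x. \<Sum>w\<in>UNIV. (d1 w * (fs w \<bullet> x)) *\<^sub>R fh w)"
proof -
  let ?D = "\<lambda>x. \<Sum>w\<in>UNIV. (d1 w * (fs w \<bullet> x)) *\<^sub>R fh w"
  have lin: "linear ?D"
  proof (rule linearI)
    fix x y :: "real^'p"
    show "?D (x + y) = ?D x + ?D y"
      by (simp add: inner_add_right distrib_left scaleR_add_left sum.distrib)
    fix c :: real
    show "?D (c *\<^sub>R x) = c *\<^sub>R ?D x"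
      by (simp add: scaleR_sum_right mult.left_commute)
  qed
  have "inj ?D"
    unfolding linear_injective_0[OF lin]
  proof (intro allI impI)
    fix x :: "real^'p" assume h: "?D x = 0"
    note cc = cov_core[of x]
    define t where "t = wn e1 (\<lambda>v. gs v \<bullet> (second_moment d1 fs *v x))"
    have "(\<sigma> - \<epsilon>) * t \<le> 0" using cc(1) h unfolding t_def by (simp add: wn_def)
    then have "t \<le> 0" using se_pos by (simp add: mult_le_0_iff)
    then have "sqrt b * norm (second_moment d1 fs *v x) \<le> 0" using cc(3) unfolding t_def by simp
    then have "norm (second_moment d1 fs *v x) \<le> 0" using b by (simp add: mult_le_0_iff)
    then have "a * norm x \<le> 0" using cc(4) by simp
    then have "norm x \<le> 0" using a by (simp add: mult_le_0_iff)
    then show "x = 0" by simp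
  qed
  then show ?thesis by (rule linear_inj_imp_surj[OF lin])
qed

lemma coverage: "(\<sigma> - \<epsilon>) * wn e2 (\<lambda>v. gh v \<bullet> z) \<le> (M+\<epsilon>) * wn e1 (\<lambda>v. gh v \<bullet> z)"
proof -
  obtain x where zx: "z = (\<Sum>w\<in>UNIV. (d1 w * (fs w \<bullet> x)) *\<^sub>R fh w)"
    using surjD[OF Dsurj, of z] by (elim exE) simp
  note cc = cov_core[of x, folded zx]
  define t where "t = wn e1 (\<lambda>v. gs v \<bullet> (second_moment d1 fs *v x))"
  define W1 where "W1 = wn e1 (\<lambda>v. gh v \<bullet> z)"
  define W2 where "W2 = wn e2 (\<lambda>v. gh v \<bullet> z)"
  have A: "(\<sigma> - \<epsilon>) * t \<le> \<sigma> * W1" using cc(1) unfolding t_def W1_def .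
  have B: "\<sigma> * W2 \<le> (M+\<epsilon>) * t" using cc(2) unfolding t_def W2_def .
  have Me: "0 \<le> M + \<epsilon>" using M_pos eps by simp
  have "\<sigma> * ((\<sigma> - \<epsilon>) * W2) = (\<sigma> - \<epsilon>) * (\<sigma> * W2)" by simp
  also have "\<dots> \<le> (\<sigma> - \<epsilon>) * ((M+\<epsilon>) * t)" by (rule mult_left_mono[OF B]) (use se_pos in simp)
  also have "\<dots> = (M+\<epsilon>) * ((\<sigma> - \<epsilon>) * t)" by simp
  also have "\<dots> \<le> (M+\<epsilon>) * (\<sigma> * W1)" by (rule mult_left_mono[OF A Me])
  also have "\<dots> = \<sigma> * ((M+\<epsilon>) * W1)" by simp
  finally have "\<sigma> * ((\<sigma> - \<epsilon>) * W2) \<le> \<sigma> * ((M+\<epsilon>) * W1)" .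
  then show ?thesis unfolding W1_def W2_def using sig_pos by simp
qed

end


context bsetting begin

lemma row:
  fixes w :: 'w
  defines "K \<equiv> (M+\<epsilon>)/(\<sigma>-\<epsilon>)"
  shows "wn e2 (\<lambda>v. fs w \<bullet> gs v - fh w \<bullet> gh v)
     \<le> (1+K)*\<epsilon>*(norm (fs w)/sqrt a) + K * wn e1 (\<lambda>v. fs w \<bullet> gs v - fh w \<bullet> gh v)"
proof -
  have lin: "linear ((*v) (second_moment d1 fs))" by (rule matrix_vector_mul_linear)
  have "inj ((*v) (second_moment d1 fs))"
    unfolding linear_injective_0[OF lin]
  proof (intro allI impI)
    fix x :: "real^'p" assume "second_moment d1 fs *v x = 0"
    then have "a * norm x \<le> 0" using lowW[of x] by simp
    then have "norm x \<le> 0" using a by (simp add: mult_le_0_iff)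
    then show "x = 0" by simp
  qed
  then have "surj ((*v) (second_moment d1 fs))" by (rule linear_inj_imp_surj[OF lin])
  from surjD[OF this, of "fs w"] obtain x where Sx: "fs w = second_moment d1 fs *v x"
    by (elim exE)
  define c where "c = (\<lambda>w'. fs w' \<bullet> x)"
  define C where "C = wn d1 c"
  have C0: "0 \<le> C" unfolding C_def by (rule wn_nonneg[OF d1])
  have "C^2 = x \<bullet> fs w" unfolding C_def wn_sq[OF d1] Sx sm_quad c_def by simp
  also have "\<dots> \<le> norm x * norm (fs w)" by (rule norm_cauchy_schwarz)
  finally have "a * C^2 \<le> a * (norm x * norm (fs w))" using a by simp
  also have "\<dots> \<le> norm (fs w) * norm (fs w)"
    using mult_left_mono[OF lowW[of x] norm_ge_zero[of "fs w"]] Sx by (simp add: algebra_simps)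
  finally have h: "a * C^2 \<le> (norm (fs w))^2" by (simp add: power2_eq_square)
  have "(sqrt a * C)^2 = a * C^2" using a by (simp add: power_mult_distrib)
  with h have "(sqrt a * C)^2 \<le> (norm (fs w))^2" by simp
  then have "sqrt a * C \<le> norm (fs w)" by (rule power2_le_imp_le) simp
  then have Cb: "C \<le> norm (fs w) / sqrt a" using a by (simp add: field_simps)
  define z where "z = (\<Sum>w'\<in>UNIV. (d1 w' * c w') *\<^sub>R fh w') - fh w"
  define \<psi> where "\<psi> = (\<lambda>v. \<Sum>w'\<in>UNIV. d1 w' * c w' * (fs w' \<bullet> gs v - fh w' \<bullet> gh v))"
  define \<Delta> where "\<Delta> = (\<lambda>v. fs w \<bullet> gs v - fh w \<bullet> gh v)"
  have key: "\<Delta> v = \<psi> v + gh v \<bullet> z" for v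
  proof -
    have 1: "fs w \<bullet> gs v = (\<Sum>w'\<in>UNIV. d1 w' * c w' * (fs w' \<bullet> gs v))"
      unfolding Sx c_def using sm_inner[of "gs v" d1 fs x] by (simp add: inner_commute algebra_simps)
    have 2: "gh v \<bullet> z = (\<Sum>w'\<in>UNIV. d1 w' * c w' * (fh w' \<bullet> gh v)) - fh w \<bullet> gh v"
      unfolding z_def inner_diff_right inner_sum_right by (simp add: inner_commute)
    show ?thesis unfolding \<Delta>_def \<psi>_def 1 2 by (simp add: sum_subtractf right_diff_distrib)
  qed
  have Deq: "\<Delta> = (\<lambda>v. \<psi> v + gh v \<bullet> z)" using key by auto
  have eeq: "(\<lambda>v. gh v \<bullet> z) = (\<lambda>v. \<Delta> v - \<psi> v)" using key by auto
  have psi1: "wn e1 \<psi> \<le> C * \<epsilon>" unfolding \<psi>_def C_def by (rule psi_bound[OF e1 R11])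
  have psi2: "wn e2 \<psi> \<le> C * \<epsilon>" unfolding \<psi>_def C_def by (rule psi_bound[OF e2 R12])
  have e1b: "wn e1 (\<lambda>v. gh v \<bullet> z) \<le> wn e1 \<Delta> + C * \<epsilon>"
    unfolding eeq using wn_diff[where d=e1 and \<phi>=\<Delta> and \<psi>=\<psi>, OF e1] psi1 by simp
  have K0: "0 \<le> K" unfolding K_def using se_pos M_pos eps by simp
  have "(\<sigma> - \<epsilon>) * wn e2 (\<lambda>v. gh v \<bullet> z) \<le> (M+\<epsilon>) * wn e1 (\<lambda>v. gh v \<bullet> z)" by (rule coverage)
  then have e2b: "wn e2 (\<lambda>v. gh v \<bullet> z) \<le> K * wn e1 (\<lambda>v. gh v \<bullet> z)"
    unfolding K_def using se_pos by (simp add: field_simps)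
  have "wn e2 \<Delta> \<le> wn e2 \<psi> + wn e2 (\<lambda>v. gh v \<bullet> z)"
    unfolding Deq by (rule wn_triangle[OF e2])
  also have "\<dots> \<le> C * \<epsilon> + K * (wn e1 \<Delta> + C * \<epsilon>)"
    using psi2 e2b mult_left_mono[OF e1b K0] by simp
  also have "\<dots> = (1+K)*\<epsilon>*C + K * wn e1 \<Delta>" by (simp add: algebra_simps)
  also have "\<dots> \<le> (1+K)*\<epsilon>*(norm (fs w)/sqrt a) + K * wn e1 \<Delta>"
    using mult_left_mono[OF Cb, of "(1+K)*\<epsilon>"] K0 eps by simp
  finally show ?thesis unfolding \<Delta>_def .
qed

end


context bsetting begin

lemma final:
  "(\<Sum>w\<in>UNIV. \<Sum>v\<in>UNIV. d2 w * e2 v * (fs w \<bullet> gs v - fh w \<bullet> gh v)^2) \<le> 64 * \<epsilon>^2 * M^4 / (a*b)^2"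
proof -
  define K where "K = (M+\<epsilon>)/(\<sigma>-\<epsilon>)"
  define \<Delta> where "\<Delta> = (\<lambda>w v. fs w \<bullet> gs v - fh w \<bullet> gh v)"
  define S where "S = wn d2 (\<lambda>w. wn e2 (\<Delta> w))"
  define A where "A = (1+K)*\<epsilon>/sqrt a"
  have K0: "0 \<le> K" unfolding K_def using se_pos M_pos eps by simp
  have A0: "0 \<le> A" unfolding A_def using K0 eps a by simp
  have S0: "0 \<le> S" unfolding S_def by (rule wn_nonneg[OF d2])
  have S2: "S^2 = (\<Sum>w\<in>UNIV. \<Sum>v\<in>UNIV. d2 w * e2 v * (\<Delta> w v)^2)"
    unfolding S_def wn_sq[OF d2] wn_sq[OF e2] sum_distrib_left by (simp add: mult.assoc)
  have "S \<le> wn d2 (\<lambda>w. A * norm (fs w) + K * wn e1 (\<Delta> w))"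
    unfolding S_def
  proof (rule wn_mono[OF d2])
    fix w
    have "wn e2 (\<Delta> w) \<le> A * norm (fs w) + K * wn e1 (\<Delta> w)"
      using row[of w] unfolding \<Delta>_def A_def K_def by simp
    moreover have "0 \<le> wn e2 (\<Delta> w)" by (rule wn_nonneg[OF e2])
    ultimately show "\<bar>wn e2 (\<Delta> w)\<bar> \<le> \<bar>A * norm (fs w) + K * wn e1 (\<Delta> w)\<bar>" by simp
  qed
  also have "\<dots> \<le> wn d2 (\<lambda>w. A * norm (fs w)) + wn d2 (\<lambda>w. K * wn e1 (\<Delta> w))"
    by (rule wn_triangle[OF d2])
  also have "\<dots> = A * wn d2 (\<lambda>w. norm (fs w)) + K * wn d2 (\<lambda>w. wn e1 (\<Delta> w))"
    using wn_scale[OF d2, where c=A and \<phi>="\<lambda>w. norm (fs w)"] wn_scale[OF d2, where c=K and \<phi>="\<lambda>w. wn e1 (\<Delta> w)"]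
      A0 K0 by simp
  also have "\<dots> \<le> A * (M / sqrt b) + K * \<epsilon>"
  proof (rule add_mono)
    have "wn d2 (\<lambda>w. norm (fs w)) \<le> M / sqrt b"
    proof (subst wn_le_iff[OF d2])
      show "0 \<le> M / sqrt b" using M_pos b by simp
      have "(\<Sum>w\<in>UNIV. d2 w * (norm (fs w))^2) \<le> M^2 / b" using F2 b by (simp add: field_simps)
      then show "(\<Sum>w\<in>UNIV. d2 w * (norm (fs w))^2) \<le> (M / sqrt b)^2"
        using b by (simp add: power_divide)
    qed
    then show "A * wn d2 (\<lambda>w. norm (fs w)) \<le> A * (M / sqrt b)" by (rule mult_left_mono[OF _ A0])
    have "wn d2 (\<lambda>w. wn e1 (\<Delta> w)) \<le> \<epsilon>"
    proof (subst wn_le_iff[OF d2])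
      show "0 \<le> \<epsilon>" by (rule eps(1))
      show "(\<Sum>w\<in>UNIV. d2 w * (wn e1 (\<Delta> w))^2) \<le> \<epsilon>^2"
        using R21 unfolding wn_sq[OF e1] \<Delta>_def sum_distrib_left by (simp add: mult.assoc)
    qed
    then show "K * wn d2 (\<lambda>w. wn e1 (\<Delta> w)) \<le> K * \<epsilon>" by (rule mult_left_mono[OF _ K0])
  qed
  also have "A * (M / sqrt b) = (1+K) * \<epsilon> * M / \<sigma>"
    unfolding A_def sig using a b by (simp add: real_sqrt_mult)
  finally have Sb: "S \<le> (1+K) * \<epsilon> * M / \<sigma> + K * \<epsilon>" .
  define k0 where "k0 = (2*M+\<sigma>)/\<sigma>"
  have Kk: "K \<le> k0"
  proof -
    have "(M+\<epsilon>) * \<sigma> \<le> (2*M+\<sigma>) * (\<sigma>-\<epsilon>)"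
    proof -
      have "2*\<epsilon>*(\<sigma>+M) \<le> \<sigma>*(\<sigma>+M)" using eps M_pos sig_pos by (intro mult_right_mono) auto
      then show ?thesis by (simp add: algebra_simps)
    qed
    then show ?thesis unfolding K_def k0_def using se_pos sig_pos by (simp add: field_simps)
  qed
  have c0: "0 \<le> \<epsilon> * M / \<sigma> + \<epsilon>" using eps M_pos sig_pos by simp
  have "S \<le> \<epsilon> * M / \<sigma> + K * (\<epsilon> * M / \<sigma> + \<epsilon>)" using Sb by (simp add: algebra_simps add_divide_distrib)
  also have "\<dots> \<le> \<epsilon> * M / \<sigma> + k0 * (\<epsilon> * M / \<sigma> + \<epsilon>)" using mult_right_mono[OF Kk c0] by simp
  also have "\<dots> = \<epsilon> * (2*M^2 + 4*M*\<sigma> + \<sigma>^2) / \<sigma>^2"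
    unfolding k0_def using sig_pos by (simp add: field_simps power2_eq_square)
  also have "\<dots> \<le> \<epsilon> * (8*M^2) / \<sigma>^2"
  proof -
    have "2*M^2 + 4*M*\<sigma> + \<sigma>^2 \<le> 8*M^2"
    proof -
      have "M*\<sigma> \<le> M*M" using M M_pos by (simp add: mult_left_mono)
      moreover have "\<sigma>*\<sigma> \<le> M*M" using M sig_pos by (simp add: mult_mono)
      moreover have "0 \<le> M*M" by simp
      ultimately show ?thesis unfolding power2_eq_square mult.assoc by linarith
    qed
    then show ?thesis using eps sig_pos by (simp add: divide_right_mono mult_left_mono)
  qed
  finally have S8: "S \<le> 8 * \<epsilon> * M^2 / \<sigma>^2" by (simp add: mult.commute mult.left_commute)
  have "S^2 \<le> (8 * \<epsilon> * M^2 / \<sigma>^2)^2" by (rule power_mono[OF S8 S0])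
  also have "\<dots> = 64 * \<epsilon>^2 * M^4 / (a*b)^2"
    using sig_sq by (simp add: power_divide power_mult_distrib flip: power_mult) 
  finally show ?thesis unfolding S2 \<Delta>_def .
qed

end


lemma mom_lower:
  fixes f :: "'w::finite \<Rightarrow> real^'p" and g :: "'v::finite \<Rightarrow> real^'p"
  assumes d: "\<And>x. 0 \<le> d x" and e: "\<And>x. 0 \<le> e x"
    and q: "\<And>y. c * (norm y)^2 \<le> (\<Sum>v\<in>UNIV. e v * (g v \<bullet> y)^2)"
  shows "c * (\<Sum>w\<in>UNIV. d w * (norm (f w))^2) \<le> (\<Sum>w\<in>UNIV. \<Sum>v\<in>UNIV. d w * e v * (f w \<bullet> g v)^2)"
proof -
  have "c * (\<Sum>w\<in>UNIV. d w * (norm (f w))^2) = (\<Sum>w\<in>UNIV. d w * (c * (norm (f w))^2))"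
    by (simp add: sum_distrib_left algebra_simps)
  also have "\<dots> \<le> (\<Sum>w\<in>UNIV. d w * (\<Sum>v\<in>UNIV. e v * (g v \<bullet> f w)^2))"
    by (rule sum_mono, rule mult_left_mono[OF q d])
  also have "\<dots> = (\<Sum>w\<in>UNIV. \<Sum>v\<in>UNIV. d w * e v * (f w \<bullet> g v)^2)"
    by (simp add: sum_distrib_left mult.assoc inner_commute)
  finally show ?thesis .
qed

theorem mainTheorem5:
  fixes fs fh :: "'w::finite \<Rightarrow> real^'p"
    and gs gh :: "'v::finite \<Rightarrow> real^'p"
    and dW :: "nat \<Rightarrow> 'w \<Rightarrow> real"
    and dV :: "nat \<Rightarrow> 'v \<Rightarrow> real"
    and \<epsilon> Ms :: real
  assumes dW: "\<And>i. i \<in> {1,2} \<Longrightarrow> is_dist (dW i)"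
    and dV: "\<And>j. j \<in> {1,2} \<Longrightarrow> is_dist (dV j)"
    and eps_nonneg: "0 \<le> \<epsilon>"
    and risk_bound: "\<And>i j. i \<in> {1,2} \<Longrightarrow> j \<in> {1,2} \<Longrightarrow> (i, j) \<noteq> (2, 2) \<Longrightarrow>
        risk (bilin fs gs) (bilin fh gh) (dW i) (dV j) \<le> \<epsilon>^2"
    and moment_bound: "\<And>i j. i \<in> {1,2} \<Longrightarrow> j \<in> {1,2} \<Longrightarrow> (i, j) \<noteq> (2, 2) \<Longrightarrow>
        prod_expect (dW i) (dV j) (\<lambda>w v. (bilin fs gs w v)^2) \<le> Ms^2"
    and sigma_pos: "sigma_min (second_moment (dW 1) fs) * sigma_min (second_moment (dV 1) gs) > 0"
    and eps_small: "\<epsilon> < sqrt (sigma_min (second_moment (dW 1) fs) * sigma_min (second_moment (dV 1) gs)) / 2"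
  shows "risk (bilin fs gs) (bilin fh gh) (dW 2) (dV 2)
     \<le> 64 * \<epsilon>^2 * Ms^4 / (sigma_min (second_moment (dW 1) fs) * sigma_min (second_moment (dV 1) gs))^2"
proof -
  define a where "a = sigma_min (second_moment (dW 1) fs)"
  define b where "b = sigma_min (second_moment (dV 1) gs)"
  have d1: "\<And>x. 0 \<le> dW 1 x" using dW[of 1] unfolding is_dist_def by simp
  have d2: "\<And>x. 0 \<le> dW 2 x" using dW[of 2] unfolding is_dist_def by simp
  have e1: "\<And>x. 0 \<le> dV 1 x" using dV[of 1] unfolding is_dist_def by simp
  have e2: "\<And>x. 0 \<le> dV 2 x" using dV[of 2] unfolding is_dist_def by simp
  have a0: "0 \<le> a" unfolding a_def by (rule sigma_min_nonneg)
  have b0: "0 \<le> b" unfolding b_def by (rule sigma_min_nonneg)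
  have ab: "a * b > 0" using sigma_pos unfolding a_def b_def .
  have a: "a > 0" using a0 ab by (metis less_eq_real_def mult_eq_0_iff)
  have b: "b > 0" using b0 ab by (metis less_eq_real_def mult_eq_0_iff)
  have qW: "\<And>x. a * (norm x)^2 \<le> (\<Sum>w\<in>UNIV. dW 1 w * (fs w \<bullet> x)^2)"
    unfolding a_def by (rule sm_quad_lower[OF d1])
  have qV: "\<And>y. b * (norm y)^2 \<le> (\<Sum>v\<in>UNIV. dV 1 v * (gs v \<bullet> y)^2)"
    unfolding b_def by (rule sm_quad_lower[OF e1])
  have mom: "(\<Sum>w\<in>UNIV. \<Sum>v\<in>UNIV. dW i w * dV j v * (fs w \<bullet> gs v)^2) \<le> Ms^2"
    if "i \<in> {1,2}" "j \<in> {1,2}" "(i, j) \<noteq> (2, 2)" for i j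
    using moment_bound[OF that] unfolding prod_expect_def bilin_def .
  have rk: "(\<Sum>w\<in>UNIV. \<Sum>v\<in>UNIV. dW i w * dV j v * (fs w \<bullet> gs v - fh w \<bullet> gh v)^2) \<le> \<epsilon>^2"
    if "i \<in> {1,2}" "j \<in> {1,2}" "(i, j) \<noteq> (2, 2)" for i j
    using risk_bound[OF that] unfolding risk_def prod_expect_def bilin_def .
  have F2: "b * (\<Sum>w\<in>UNIV. dW 2 w * (norm (fs w))^2) \<le> Ms^2"
    using mom_lower[where d="dW 2" and e="dV 1" and g=gs and c=b and f=fs, OF d2 e1 qV] mom[of 2 1] by simp
  have F1: "b * (\<Sum>w\<in>UNIV. dW 1 w * (norm (fs w))^2) \<le> Ms^2"
    using mom_lower[where d="dW 1" and e="dV 1" and g=gs and c=b and f=fs, OF d1 e1 qV] mom[of 1 1] by simp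
  have G2: "a * (\<Sum>v\<in>UNIV. dV 2 v * (norm (gs v))^2) \<le> \<bar>Ms\<bar>^2"
  proof -
    have "a * (\<Sum>v\<in>UNIV. dV 2 v * (norm (gs v))^2) \<le> (\<Sum>v\<in>UNIV. \<Sum>w\<in>UNIV. dV 2 v * dW 1 w * (gs v \<bullet> fs w)^2)"
      by (rule mom_lower[where d="dV 2" and e="dW 1" and g=fs and c=a and f=gs, OF e2 d1 qW])
    also have "\<dots> = (\<Sum>w\<in>UNIV. \<Sum>v\<in>UNIV. dW 1 w * dV 2 v * (fs w \<bullet> gs v)^2)"
      by (subst sum.swap) (simp add: inner_commute mult.commute)
    also have "\<dots> \<le> Ms^2" by (rule mom) auto
    finally show ?thesis by simp
  qed
  have abM: "a * b \<le> Ms^2"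
  proof -
    obtain k :: 'p where True by simp
    define ee :: "real^'p" where "ee = axis k 1"
    have ne: "norm ee = 1" unfolding ee_def by (simp add: norm_axis_1)
    have "a = a * (norm ee)^2" using ne by simp
    also have "\<dots> \<le> (\<Sum>w\<in>UNIV. dW 1 w * (fs w \<bullet> ee)^2)" by (rule qW)
    also have "\<dots> \<le> (\<Sum>w\<in>UNIV. dW 1 w * (norm (fs w))^2)"
    proof (rule sum_mono, rule mult_left_mono[OF _ d1])
      fix w
      have "\<bar>fs w \<bullet> ee\<bar> \<le> norm (fs w) * norm ee" by (rule Cauchy_Schwarz_ineq2)
      then have "\<bar>fs w \<bullet> ee\<bar> \<le> norm (fs w)" using ne by simp
      from power_mono[OF this abs_ge_zero, of 2] show "(fs w \<bullet> ee)^2 \<le> (norm (fs w))^2" by simp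
    qed
    finally have "a * b \<le> (\<Sum>w\<in>UNIV. dW 1 w * (norm (fs w))^2) * b" using b by (simp add: mult_right_mono)
    with F1 show ?thesis by (simp add: mult.commute)
  qed
  have sM: "sqrt (a*b) \<le> \<bar>Ms\<bar>" using abM by (metis real_sqrt_abs real_sqrt_le_mono)
  interpret bsetting fs fh gs gh "dW 1" "dW 2" "dV 1" "dV 2" a b "\<bar>Ms\<bar>" \<epsilon> "sqrt (a*b)"
  proof
    show "\<And>x. a * norm x \<le> norm (second_moment (dW 1) fs *v x)" unfolding a_def by (rule sigma_min_low)
  qed (use d1 d2 e1 e2 a b qV G2 F2 sM rk eps_nonneg eps_small in \<open>auto simp: a_def b_def\<close>)
  have "(\<Sum>w\<in>UNIV. \<Sum>v\<in>UNIV. dW 2 w * dV 2 v * (fs w \<bullet> gs v - fh w \<bullet> gh v)^2) \<le> 64 * \<epsilon>^2 * \<bar>Ms\<bar>^4 / (a*b)^2"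
    by (rule final)
  then show ?thesis unfolding risk_def prod_expect_def bilin_def a_def b_def by simp
qed

end
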